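(* Let $n\ge1$, $p$ a prime, $R,S\subset E_n$, and let $\mathcal{C}=\{x\in\mathbb{Z}^n:F^{(i)}_{T^{(i)}}(x)\le0\ \forall i\in S\}$ be the $S$-adapted $p$-cone attached to a family $(T^{(i)})_{i\in S}$. Then $\mathcal{C}_{\mathsf{pHa},S}\subset\mathcal{C}$ if and only if $\mathcal{C}$ is Hasse-admissible and positive.
   Context: $E_n=\{1,\dots,n\}$, indices mod $n$; $e_i$ standard basis ($e_0=e_n$). $\delta_U^{(i)}=-1$ if $i\in U$, else $1$. $F^{(d)}_T(x)=\sum_{i=0}^{n-1}p^i\delta_T^{(d+i)}x_{d+i}$. Saturation of a submonoid $A\subset\mathbb{Z}^n$: $\{x:mx\in A\text{ for some }m\ge1\}$. $\mathsf{ha}^{(i)}_{R,S}=-\delta_S^{(i)}e_i-p\delta_R^{(i-1)}e_{i-1}$; $\mathcal{C}_{\mathsf{pHa},S}$ is the saturation of $\sum_{i\in S}\mathbb{N}\mathsf{ha}^{(i)}_{R,S}+\sum_{i\notin S}\mathbb{Z}\mathsf{ha}^{(i)}_{R,S}$. $T$ is $(R,S)$-admissible if for each $i$ with $i+1\notin S$: if $i\notin R$ exactly one of $i,i+1$ lies in $T$, if $i\in R$ both or neither lie in $T$. $T$ is $j$-positive if ($j-1\in T\iff j-1\in R$). $T$ is Hasse-admissible if it is $(R,S)$-admissible and $j$-positive for every $j\in S\setminus T$. $\mathcal{C}$ is Hasse-admissible if every $T^{(i)}$ is, and positive if every $T^{(i)}$ is $i$-positive. *)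

theory Defs
  imports "HOL-Computational_Algebra.Primes"
begin

text \<open>Indices live in E_n = {1..n}; an arbitrary integer index k is read mod n
  and normalised to the representative in {1..n} (so index 0 means n).\<close>
definition nidx :: "nat \<Rightarrow> int \<Rightarrow> nat" where
  "nidx n k = nat ((k - 1) mod int n + 1)"

definition Zn :: "nat \<Rightarrow> (nat \<Rightarrow> int) set" where
  "Zn n = {x. \<forall>i. i \<notin> {1..n} \<longrightarrow> x i = 0}"

definition delta :: "nat \<Rightarrow> nat set \<Rightarrow> int \<Rightarrow> int" where
  "delta n U k = (if nidx n k \<in> U then -1 else 1)"

definition ebas :: "nat \<Rightarrow> int \<Rightarrow> nat \<Rightarrow> int" where
  "ebas n k = (\<lambda>j. if j = nidx n k then 1 else 0)"

definition Fp :: "nat \<Rightarrow> nat \<Rightarrow> nat set \<Rightarrow> int \<Rightarrow> (nat \<Rightarrow> int) \<Rightarrow> int" where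
  "Fp n p T d x = (\<Sum>i<n. int p ^ i * delta n T (d + int i) * x (nidx n (d + int i)))"

definition ha :: "nat \<Rightarrow> nat \<Rightarrow> nat set \<Rightarrow> nat set \<Rightarrow> int \<Rightarrow> nat \<Rightarrow> int" where
  "ha n p R S i = (\<lambda>j. - delta n S i * ebas n i j - int p * delta n R (i - 1) * ebas n (i - 1) j)"

definition haMonoid :: "nat \<Rightarrow> nat \<Rightarrow> nat set \<Rightarrow> nat set \<Rightarrow> (nat \<Rightarrow> int) set" where
  "haMonoid n p R S = {(\<lambda>j. \<Sum>i\<in>{1..n}. a i * ha n p R S (int i) j) | a.
       \<forall>i\<in>S. a i \<ge> 0}"

definition saturation :: "nat \<Rightarrow> (nat \<Rightarrow> int) set \<Rightarrow> (nat \<Rightarrow> int) set" where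
  "saturation n A = {x \<in> Zn n. \<exists>m::nat. m \<ge> 1 \<and> (\<lambda>j. int m * x j) \<in> A}"

definition CpHa :: "nat \<Rightarrow> nat \<Rightarrow> nat set \<Rightarrow> nat set \<Rightarrow> (nat \<Rightarrow> int) set" where
  "CpHa n p R S = saturation n (haMonoid n p R S)"

definition pcone :: "nat \<Rightarrow> nat \<Rightarrow> nat set \<Rightarrow> (nat \<Rightarrow> nat set) \<Rightarrow> (nat \<Rightarrow> int) set" where
  "pcone n p S T = {x \<in> Zn n. \<forall>i\<in>S. Fp n p (T i) (int i) x \<le> 0}"

definition RS_admissible :: "nat \<Rightarrow> nat set \<Rightarrow> nat set \<Rightarrow> nat set \<Rightarrow> bool" where
  "RS_admissible n R S T = (\<forall>i\<in>{1..n}. nidx n (int i + 1) \<notin> S \<longrightarrow>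
     (if i \<notin> R then ((i \<in> T) \<noteq> (nidx n (int i + 1) \<in> T))
      else ((i \<in> T) = (nidx n (int i + 1) \<in> T))))"

definition j_positive :: "nat \<Rightarrow> nat set \<Rightarrow> nat \<Rightarrow> nat set \<Rightarrow> bool" where
  "j_positive n R j T = ((nidx n (int j - 1) \<in> T) = (nidx n (int j - 1) \<in> R))"

definition hasse_admissible :: "nat \<Rightarrow> nat set \<Rightarrow> nat set \<Rightarrow> nat set \<Rightarrow> bool" where
  "hasse_admissible n R S T = (RS_admissible n R S T \<and> (\<forall>j\<in>S - T. j_positive n R j T))"

definition family_hasse_admissible :: "nat \<Rightarrow> nat set \<Rightarrow> nat set \<Rightarrow> (nat \<Rightarrow> nat set) \<Rightarrow> bool" where
  "family_hasse_admissible n R S T = (\<forall>i\<in>S. hasse_admissible n R S (T i))"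

definition family_positive :: "nat \<Rightarrow> nat set \<Rightarrow> nat set \<Rightarrow> (nat \<Rightarrow> nat set) \<Rightarrow> bool" where
  "family_positive n R S T = (\<forall>i\<in>S. j_positive n R i (T i))"

end

theory Submission
  imports Defs
begin

lemma nidx_eq: assumes "n \<ge> 1" shows "nidx n a = nidx n b \<longleftrightarrow> a mod int n = b mod int n"
proof -
  have "nidx n a = nidx n b \<longleftrightarrow> (a - 1) mod int n = (b - 1) mod int n"
  proof -
    have "0 \<le> (a - 1) mod int n" "0 \<le> (b - 1) mod int n" using assms by simp_all
    thus ?thesis unfolding nidx_def by (simp add: eq_nat_nat_iff)
  qed
  also have "\<dots> \<longleftrightarrow> int n dvd (a - b)"
    by (simp add: mod_eq_dvd_iff)
  also have "\<dots> \<longleftrightarrow> a mod int n = b mod int n"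
    by (simp add: mod_eq_dvd_iff)
  finally show ?thesis .
qed

lemma nidx_range: assumes "n \<ge> 1" shows "nidx n a \<in> {1..n}"
proof -
  have "0 \<le> (a - 1) mod int n" "(a - 1) mod int n < int n" using assms by simp_all
  thus ?thesis unfolding nidx_def by auto
qed

lemma nidx_id: assumes "i \<in> {1..n}" shows "nidx n (int i) = i"
proof -
  have "(int i - 1) mod int n = int i - 1" using assms by (intro mod_pos_pos_trivial) auto
  thus ?thesis unfolding nidx_def by simp
qed

lemma nidx_nidx: assumes "n \<ge> 1" shows "nidx n (int (nidx n a) + c) = nidx n (a + c)"
proof -
  have "int (nidx n a) = (a - 1) mod int n + 1" unfolding nidx_def using assms
    by simp
  hence "(int (nidx n a) + c) mod int n = (a + c) mod int n"
    by (metis (no_types, lifting) add.commute add_diff_cancel_left' diff_add_cancel mod_add_left_eq)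
  thus ?thesis using nidx_eq[OF assms] by blast
qed

lemma pick: assumes "n \<ge> 1"
  shows "(\<Sum>i<n. f i * (if nidx n (d + int i) = nidx n c then 1 else 0)) = (f (nat ((c - d) mod int n)) :: int)"
proof -
  have "nidx n (d + int i) = nidx n c \<longleftrightarrow> i = nat ((c - d) mod int n)" if "i < n" for i
  proof -
    have "nidx n (d + int i) = nidx n c \<longleftrightarrow> (d + int i) mod int n = c mod int n" using nidx_eq[OF assms] by blast
    also have "\<dots> \<longleftrightarrow> int i mod int n = (c - d) mod int n"
      by (metis add.commute add_diff_cancel_left' diff_add_cancel mod_add_left_eq mod_diff_left_eq)
    also have "int i mod int n = int i" using that by simp
    moreover have "0 \<le> (c - d) mod int n" using assms by simp
    ultimately show ?thesis by auto
  qed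
  hence "(\<Sum>i<n. f i * (if nidx n (d + int i) = nidx n c then 1 else 0)) = (\<Sum>i<n. if i = nat ((c - d) mod int n) then f i else 0)"
    by (intro sum.cong) auto
  also have "\<dots> = f (nat ((c - d) mod int n))"
    using assms by (simp add: nat_less_iff)
  finally show ?thesis .
qed


lemma nidx_off: assumes "n \<ge> 1" shows "nidx n (d + int (nat ((c - d) mod int n))) = nidx n c"
proof -
  have "0 \<le> (c - d) mod int n" using assms by simp
  hence "d + int (nat ((c - d) mod int n)) = d + (c - d) mod int n" by simp
  moreover have "(d + (c - d) mod int n) mod int n = c mod int n"
    by (metis add.commute diff_add_cancel mod_add_left_eq)
  ultimately show ?thesis using nidx_eq[OF assms] by simp
qed

lemma delta_cong: "nidx n a = nidx n b \<Longrightarrow> delta n U a = delta n U b"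
  unfolding delta_def by simp

lemma mod_minus_one: assumes "(x::int) mod m \<noteq> 0" "0 < m" shows "(x - 1) mod m = x mod m - 1"
proof -
  have "(x - 1) mod m = (x mod m - 1) mod m" by (simp add: mod_diff_left_eq)
  also have "\<dots> = x mod m - 1"
  proof -
    have "0 \<le> x mod m" "x mod m < m" using assms(2) by simp_all
    thus ?thesis using assms(1) by (intro mod_pos_pos_trivial) linarith+
  qed
  finally show ?thesis .
qed

lemma Fha:
  assumes n: "n \<ge> 1" and d: "d \<in> {1..n}" and k: "k \<in> {1..n}"
  shows "Fp n p T (int d) (ha n p R S (int k)) =
    (if k = d then - delta n T (int k) * delta n S (int k) - int p ^ n * delta n T (int k - 1) * delta n R (int k - 1)
     else - (int p ^ nat ((int k - int d) mod int n)) * (delta n T (int k) * delta n S (int k) + delta n T (int k - 1) * delta n R (int k - 1)))"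
proof -
  define g where "g i = int p ^ i * delta n T (int d + int i)" for i
  define a where "a = nat ((int k - int d) mod int n)"
  define b where "b = nat ((int k - 1 - int d) mod int n)"
  let ?I1 = "\<lambda>i. (if nidx n (int d + int i) = nidx n (int k) then 1 else 0) :: int"
  let ?I2 = "\<lambda>i. (if nidx n (int d + int i) = nidx n (int k - 1) then 1 else 0) :: int"
  have "Fp n p T (int d) (ha n p R S (int k)) =
     (\<Sum>i<n. g i * (- delta n S (int k)) * ?I1 i + g i * (- (int p * delta n R (int k - 1))) * ?I2 i)"
    unfolding Fp_def ha_def ebas_def g_def by (intro sum.cong) (auto simp: algebra_simps)
  also have "\<dots> = (\<Sum>i<n. g i * (- delta n S (int k)) * ?I1 i) + (\<Sum>i<n. g i * (- (int p * delta n R (int k - 1))) * ?I2 i)"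
    by (rule sum.distrib)
  also have "\<dots> = g a * (- delta n S (int k)) + g b * (- (int p * delta n R (int k - 1)))"
    unfolding a_def b_def
    by (subst pick[OF n], subst pick[OF n]) simp
  finally have F: "Fp n p T (int d) (ha n p R S (int k)) = g a * (- delta n S (int k)) + g b * (- (int p * delta n R (int k - 1)))" .
  have ga: "g a = int p ^ a * delta n T (int k)" unfolding g_def a_def
    using delta_cong[OF nidx_off[OF n]] by simp
  have gb: "g b = int p ^ b * delta n T (int k - 1)" unfolding g_def b_def
    using delta_cong[OF nidx_off[OF n]] by simp
  show ?thesis
  proof (cases "k = d")
    case True
    have "a = 0" unfolding a_def using True by simp
    moreover have "b = n - 1" unfolding b_def using True n by (simp add: zmod_minus1 nat_diff_distrib)
    moreover have pn: "int p ^ n = int p * int p ^ (n - 1)" using n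
      by (metis Suc_diff_le diff_Suc_1 power_Suc)
    ultimately show ?thesis using True F ga gb by (simp add: pn algebra_simps)
  next
    case False
    have nz: "(int k - int d) mod int n \<noteq> 0"
    proof
      assume "(int k - int d) mod int n = 0"
      hence "int k mod int n = int d mod int n" by (metis mod_0_imp_dvd mod_eq_dvd_iff)
      hence "nidx n (int k) = nidx n (int d)" using nidx_eq[OF n] by blast
      thus False using False nidx_id[OF k] nidx_id[OF d] by simp
    qed
    have "(int k - 1 - int d) mod int n = (int k - int d) mod int n - 1"
      using mod_minus_one[OF nz] n by (simp add: algebra_simps)
    moreover have "0 \<le> (int k - int d) mod int n" using n by simp
    ultimately have X: "0 \<le> (int k - 1 - int d) mod int n" "(int k - int d) mod int n = 1 + (int k - 1 - int d) mod int n"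
      using nz by linarith+
    have ab: "a = Suc b" unfolding a_def b_def using X by (simp add: Suc_nat_eq_nat_zadd1)
    have pa: "int p ^ a = int p * int p ^ b" using ab by simp
    have "nat ((int k - int d) mod int n) = a" by (simp add: a_def)
    thus ?thesis using False F ga gb by (simp add: pa algebra_simps)
  qed
qed


lemma Fp_lin: "Fp n p T d (\<lambda>j. \<Sum>i\<in>A. a i * h i j) = (\<Sum>i\<in>A. a i * Fp n p T d (h i))"
  unfolding Fp_def sum_distrib_left
  by (subst sum.swap) (simp add: mult_ac)

lemma Fp_scal: "Fp n p T d (\<lambda>j. c * x j) = c * Fp n p T d x"
  unfolding Fp_def by (simp add: sum_distrib_left mult_ac)

lemma ha_Zn: assumes "n \<ge> 1" shows "ha n p R S i \<in> Zn n"
  unfolding Zn_def ha_def ebas_def using nidx_range[OF assms] by fastforce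

lemma ha_in: assumes n: "n \<ge> 1" and k: "k \<in> {1..n}" and c: "k \<in> S \<longrightarrow> c \<ge> 0"
  shows "(\<lambda>j. c * ha n p R S (int k) j) \<in> CpHa n p R S"
proof -
  define a where "a = (\<lambda>i. if i = k then c else 0)"
  have "(\<lambda>j. c * ha n p R S (int k) j) = (\<lambda>j. \<Sum>i\<in>{1..n}. a i * ha n p R S (int i) j)"
  proof
    fix j
    have "(\<Sum>i\<in>{1..n}. a i * ha n p R S (int i) j) = (\<Sum>i\<in>{1..n}. if i = k then c * ha n p R S (int i) j else 0)"
      unfolding a_def by (intro sum.cong) auto
    also have "\<dots> = c * ha n p R S (int k) j" using k by simp
    finally show "c * ha n p R S (int k) j = (\<Sum>i\<in>{1..n}. a i * ha n p R S (int i) j)" by simp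
  qed
  moreover have "\<forall>i\<in>S. a i \<ge> 0" unfolding a_def using c by auto
  ultimately have "(\<lambda>j. c * ha n p R S (int k) j) \<in> haMonoid n p R S"
    unfolding haMonoid_def by blast
  moreover have "(\<lambda>j. c * ha n p R S (int k) j) \<in> Zn n"
    using ha_Zn[OF n, of p R S "int k"] unfolding Zn_def by auto
  ultimately show ?thesis unfolding CpHa_def saturation_def
    by (auto intro!: exI[of _ 1])
qed

lemma LHS:
  assumes n: "n \<ge> 1"
  shows "CpHa n p R S \<subseteq> pcone n p S T \<longleftrightarrow>
    (\<forall>d\<in>S. \<forall>k\<in>{1..n}. (k \<in> S \<longrightarrow> Fp n p (T d) (int d) (ha n p R S (int k)) \<le> 0) \<and>
                         (k \<notin> S \<longrightarrow> Fp n p (T d) (int d) (ha n p R S (int k)) = 0))"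
proof
  assume sub: "CpHa n p R S \<subseteq> pcone n p S T"
  show "\<forall>d\<in>S. \<forall>k\<in>{1..n}. (k \<in> S \<longrightarrow> Fp n p (T d) (int d) (ha n p R S (int k)) \<le> 0) \<and>
                         (k \<notin> S \<longrightarrow> Fp n p (T d) (int d) (ha n p R S (int k)) = 0)"
  proof (intro ballI conjI impI)
    fix d k assume d: "d \<in> S" and k: "k \<in> {1..n}"
    have "(\<lambda>j. 1 * ha n p R S (int k) j) \<in> pcone n p S T"
      using sub ha_in[OF n k, of S 1 p R] by auto
    hence le: "Fp n p (T d) (int d) (ha n p R S (int k)) \<le> 0"
      using d unfolding pcone_def by (simp add: Fp_scal[of _ _ _ _ 1, simplified])
    thus "Fp n p (T d) (int d) (ha n p R S (int k)) \<le> 0" .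
    assume kS: "k \<notin> S"
    have "(\<lambda>j. (-1) * ha n p R S (int k) j) \<in> pcone n p S T"
      using sub ha_in[OF n k, of S "-1" p R] kS by auto
    hence "Fp n p (T d) (int d) (\<lambda>j. (-1) * ha n p R S (int k) j) \<le> 0"
      using d unfolding pcone_def by blast
    hence "(-1) * Fp n p (T d) (int d) (ha n p R S (int k)) \<le> 0"
      unfolding Fp_scal .
    thus "Fp n p (T d) (int d) (ha n p R S (int k)) = 0" using le by linarith
  qed
next
  assume H: "\<forall>d\<in>S. \<forall>k\<in>{1..n}. (k \<in> S \<longrightarrow> Fp n p (T d) (int d) (ha n p R S (int k)) \<le> 0) \<and>
                         (k \<notin> S \<longrightarrow> Fp n p (T d) (int d) (ha n p R S (int k)) = 0)"
  show "CpHa n p R S \<subseteq> pcone n p S T"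
  proof
    fix x assume "x \<in> CpHa n p R S"
    then obtain m a where x: "x \<in> Zn n" and m: "m \<ge> 1"
      and eq: "(\<lambda>j. int m * x j) = (\<lambda>j. \<Sum>i\<in>{1..n}. a i * ha n p R S (int i) j)"
      and a: "\<forall>i\<in>S. a i \<ge> 0"
      unfolding CpHa_def saturation_def haMonoid_def by blast
    have "Fp n p (T d) (int d) x \<le> 0" if d: "d \<in> S" for d
    proof -
      have "int m * Fp n p (T d) (int d) x = Fp n p (T d) (int d) (\<lambda>j. int m * x j)"
        by (simp add: Fp_scal)
      also have "\<dots> = (\<Sum>i\<in>{1..n}. a i * Fp n p (T d) (int d) (ha n p R S (int i)))"
        unfolding eq Fp_lin ..
      also have "\<dots> \<le> 0"
      proof (rule sum_nonpos)
        fix i assume i: "i \<in> {1..n}"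
        show "a i * Fp n p (T d) (int d) (ha n p R S (int i)) \<le> 0"
        proof (cases "i \<in> S")
          case True
          thus ?thesis using H d i a by (simp add: mult_nonneg_nonpos)
        next
          case False
          thus ?thesis using H d i by simp
        qed
      qed
      finally have "int m * Fp n p (T d) (int d) x \<le> 0" .
      moreover have "int m > 0" using m by simp
      ultimately show ?thesis by (simp add: mult_le_0_iff)
    qed
    thus "x \<in> pcone n p S T" unfolding pcone_def using x by blast
  qed
qed

lemma Qk:
  assumes n: "n \<ge> 1" and p: "p \<ge> 2" and d: "d \<in> {1..n}" and dS: "d \<in> S" and k: "k \<in> {1..n}"
  shows "((k \<in> S \<longrightarrow> Fp n p U (int d) (ha n p R S (int k)) \<le> 0) \<and>
          (k \<notin> S \<longrightarrow> Fp n p U (int d) (ha n p R S (int k)) = 0)) \<longleftrightarrow>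
    (if k = d then (nidx n (int k - 1) \<in> U \<longleftrightarrow> nidx n (int k - 1) \<in> R)
     else if k \<in> S then (k \<notin> U \<longrightarrow> (nidx n (int k - 1) \<in> U \<longleftrightarrow> nidx n (int k - 1) \<in> R))
     else (if nidx n (int k - 1) \<notin> R then (nidx n (int k - 1) \<in> U) \<noteq> (k \<in> U)
           else (nidx n (int k - 1) \<in> U) = (k \<in> U)))"
proof -
  have dk: "\<And>V. delta n V (int k) = (if k \<in> V then -1 else 1)"
    unfolding delta_def using nidx_id[OF k] by simp
  have dm: "\<And>V. delta n V (int k - 1) = (if nidx n (int k - 1) \<in> V then -1 else 1)"
    unfolding delta_def by simp
  have "2 \<le> p ^ n" using self_le_power[of p n] n p by linarith
  hence "(2::int) \<le> int (p ^ n)" by linarith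
  hence pn: "2 \<le> int p ^ n" by simp
  show ?thesis
  proof (cases "k = d")
    case True
    have F: "Fp n p U (int d) (ha n p R S (int k)) = - delta n U (int k) * delta n S (int k) - int p ^ n * delta n U (int k - 1) * delta n R (int k - 1)"
      using Fha[OF n d k] True by simp
    have "k \<in> S" using True dS by simp
    then show ?thesis using True pn unfolding F dk dm
      by (auto split: if_splits)
  next
    case False
    define P where "P = int p ^ nat ((int k - int d) mod int n)"
    have P: "P > 0" unfolding P_def using p by simp
    have F: "Fp n p U (int d) (ha n p R S (int k)) = - P * (delta n U (int k) * delta n S (int k) + delta n U (int k - 1) * delta n R (int k - 1))"
      using Fha[OF n d k] False unfolding P_def by simp
    show ?thesis using False P unfolding F dk dm
      by (auto split: if_splits)
  qed
qed

lemma comb: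
  assumes n: "n \<ge> 1" and p: "p \<ge> 2" and dS: "d \<in> S" and S: "S \<subseteq> {1..n}"
  shows "(\<forall>k\<in>{1..n}. (k \<in> S \<longrightarrow> Fp n p U (int d) (ha n p R S (int k)) \<le> 0) \<and>
          (k \<notin> S \<longrightarrow> Fp n p U (int d) (ha n p R S (int k)) = 0)) \<longleftrightarrow>
         hasse_admissible n R S U \<and> j_positive n R d U"
proof -
  have d: "d \<in> {1..n}" using dS S by blast
  let ?m = "\<lambda>k. nidx n (int k - 1)"
  define C where "C k = (if k = d then (?m k \<in> U \<longleftrightarrow> ?m k \<in> R)
     else if k \<in> S then (k \<notin> U \<longrightarrow> (?m k \<in> U \<longleftrightarrow> ?m k \<in> R))
     else (if ?m k \<notin> R then (?m k \<in> U) \<noteq> (k \<in> U)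
           else (?m k \<in> U) = (k \<in> U)))" for k
  have "(\<forall>k\<in>{1..n}. (k \<in> S \<longrightarrow> Fp n p U (int d) (ha n p R S (int k)) \<le> 0) \<and>
          (k \<notin> S \<longrightarrow> Fp n p U (int d) (ha n p R S (int k)) = 0)) \<longleftrightarrow> (\<forall>k\<in>{1..n}. C k)"
    unfolding C_def using Qk[OF n p d dS] by blast
  also have "\<dots> \<longleftrightarrow> hasse_admissible n R S U \<and> j_positive n R d U"
  proof
    assume A: "\<forall>k\<in>{1..n}. C k"
    have jd: "j_positive n R d U" using A d unfolding C_def j_positive_def by auto
    have RS: "RS_admissible n R S U"
      unfolding RS_admissible_def
    proof (intro ballI impI)
      fix i assume i: "i \<in> {1..n}" and nS: "nidx n (int i + 1) \<notin> S"
      define k where "k = nidx n (int i + 1)"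
      have k: "k \<in> {1..n}" unfolding k_def using nidx_range[OF n] .
      have mk: "?m k = i" unfolding k_def
        using nidx_nidx[OF n, of "int i + 1" "-1"] nidx_id[OF i] by simp
      have "k \<noteq> d" "k \<notin> S" using nS dS unfolding k_def by auto
      have "C k" using A k by blast
      hence "if ?m k \<notin> R then (?m k \<in> U) \<noteq> (k \<in> U) else (?m k \<in> U) = (k \<in> U)"
        unfolding C_def using \<open>k \<noteq> d\<close> \<open>k \<notin> S\<close> by simp
      hence "if i \<notin> R then (i \<in> U) \<noteq> (k \<in> U) else (i \<in> U) = (k \<in> U)"
        unfolding mk .
      thus "if i \<notin> R then (i \<in> U) \<noteq> (nidx n (int i + 1) \<in> U)
             else (i \<in> U) = (nidx n (int i + 1) \<in> U)"
        unfolding k_def .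
    qed
    have "\<forall>j\<in>S - U. j_positive n R j U"
    proof
      fix j assume j: "j \<in> S - U"
      hence "j \<in> {1..n}" using S by blast
      hence "C j" using A by blast
      thus "j_positive n R j U" using j jd unfolding C_def j_positive_def by (cases "j = d") auto
    qed
    thus "hasse_admissible n R S U \<and> j_positive n R d U"
      using RS jd unfolding hasse_admissible_def by blast
  next
    assume B: "hasse_admissible n R S U \<and> j_positive n R d U"
    show "\<forall>k\<in>{1..n}. C k"
    proof
      fix k assume k: "k \<in> {1..n}"
      show "C k"
      proof (cases "k = d")
        case True thus ?thesis using B unfolding C_def j_positive_def by simp
      next
        case False
        show ?thesis
        proof (cases "k \<in> S")
          case True
          thus ?thesis using B False unfolding C_def hasse_admissible_def j_positive_def by auto
        next
          case kS: False
          define i where "i = ?m k"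
          have i: "i \<in> {1..n}" unfolding i_def using nidx_range[OF n] .
          have ik: "nidx n (int i + 1) = k" unfolding i_def
            using nidx_nidx[OF n, of "int k - 1" 1] nidx_id[OF k] by simp
          have "RS_admissible n R S U" using B unfolding hasse_admissible_def by blast
          hence "if i \<notin> R then (i \<in> U) \<noteq> (k \<in> U) else (i \<in> U) = (k \<in> U)"
            using i ik kS unfolding RS_admissible_def by force
          thus ?thesis using False kS unfolding C_def i_def by simp
        qed
      qed
    qed
  qed
  finally show ?thesis .
qed

theorem mainTheorem9:
  fixes n p :: nat and R S :: "nat set" and T :: "nat \<Rightarrow> nat set"
  assumes "n \<ge> 1" and "prime p"
    and "R \<subseteq> {1..n}" and "S \<subseteq> {1..n}"
    and "\<forall>i\<in>S. T i \<subseteq> {1..n}"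
  shows "CpHa n p R S \<subseteq> pcone n p S T \<longleftrightarrow>
         (family_hasse_admissible n R S T \<and> family_positive n R S T)"
proof -
  have n: "n \<ge> 1" using assms(1) .
  have p: "p \<ge> 2" using prime_ge_2_nat[OF assms(2)] .
  have "CpHa n p R S \<subseteq> pcone n p S T \<longleftrightarrow>
    (\<forall>d\<in>S. \<forall>k\<in>{1..n}. (k \<in> S \<longrightarrow> Fp n p (T d) (int d) (ha n p R S (int k)) \<le> 0) \<and>
                         (k \<notin> S \<longrightarrow> Fp n p (T d) (int d) (ha n p R S (int k)) = 0))"
    by (rule LHS[OF n])
  also have "\<dots> \<longleftrightarrow> (\<forall>d\<in>S. hasse_admissible n R S (T d) \<and> j_positive n R d (T d))"
    using comb[OF n p _ assms(4)] by blast
  also have "\<dots> \<longleftrightarrow> (family_hasse_admissible n R S T \<and> family_positive n R S T)"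
    unfolding family_hasse_admissible_def family_positive_def by blast
  finally show ?thesis .
qed

end
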